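(* Let $z,x,y\in[0,1]$ satisfy $z=x+y$, and write their concise binary expansions as $z=(z_0.z_1z_2\ldots)_2$, $x=(x_0.x_1x_2\ldots)_2$, $y=(y_0.y_1y_2\ldots)_2$. Suppose $0\le \ell<\ell'$ are indices such that $z_\ell=1$, $z_{\ell'}=1$, and $z_j=0$ for all $\ell+1\le j\le \ell'-1$. Then the bit pairs $(x_j,y_j)$ for $\ell\le j\le \ell'$ satisfy exactly one of the following three patterns: (1) $(x_\ell,y_\ell)\in\{(0,1),(1,0)\}$, $(x_j,y_j)=(0,0)$ for all $\ell<j<\ell'$, and $(x_{\ell'},y_{\ell'})\in\{(0,0),(0,1),(1,0)\}$; (2) $(x_\ell,y_\ell)\in\{(0,0),(1,1)\}$, $(x_j,y_j)\in\{(0,1),(1,0)\}$ for all $\ell<j<\ell'$, and $(x_{\ell'},y_{\ell'})=(1,1)$; (3) $(x_\ell,y_\ell)\in\{(0,0),(1,1)\}$, and there are integers $k_1,k_2\ge 0$ with $k_1+k_2=\ell'-\ell-2$ such that $(x_j,y_j)\in\{(0,1),(1,0)\}$ for $\ell<j\le \ell+k_1$, $(x_{\ell+k_1+1},y_{\ell+k_1+1})=(1,1)$, $(x_j,y_j)=(0,0)$ for $\ell+k_1+1<j<\ell'$, and $(x_{\ell'},y_{\ell'})\in\{(0,0),(0,1),(1,0)\}$.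
   Context: A concise binary expansion of a real number is a binary representation $(z_0.z_1z_2\ldots)_2=\sum_{i\ge0} z_i2^{-i}$ with $z_i\in\{0,1\}$ that does not end in an infinite string of 1s. *)

theory Defs
  imports Complex_Main
begin

definition concise_binary_expansion :: "real \<Rightarrow> (nat \<Rightarrow> nat) \<Rightarrow> bool" where
  "concise_binary_expansion r d \<longleftrightarrow>
     (\<forall>i. d i \<in> {0, 1}) \<and>
     (\<lambda>i. real (d i) / 2 ^ i) sums r \<and>
     \<not> (\<exists>N. \<forall>i\<ge>N. d i = 1)"

definition pattern1 :: "nat \<Rightarrow> nat \<Rightarrow> (nat \<Rightarrow> nat) \<Rightarrow> (nat \<Rightarrow> nat) \<Rightarrow> bool" where
  "pattern1 l l' x y \<longleftrightarrow>
     (x l, y l) \<in> {(0, 1), (1, 0)} \<and>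
     (\<forall>j. l < j \<and> j < l' \<longrightarrow> (x j, y j) = (0, 0)) \<and>
     (x l', y l') \<in> {(0, 0), (0, 1), (1, 0)}"

definition pattern2 :: "nat \<Rightarrow> nat \<Rightarrow> (nat \<Rightarrow> nat) \<Rightarrow> (nat \<Rightarrow> nat) \<Rightarrow> bool" where
  "pattern2 l l' x y \<longleftrightarrow>
     (x l, y l) \<in> {(0, 0), (1, 1)} \<and>
     (\<forall>j. l < j \<and> j < l' \<longrightarrow> (x j, y j) \<in> {(0, 1), (1, 0)}) \<and>
     (x l', y l') = (1, 1)"

text \<open>k1, k2 are nonnegative integers with k1 + k2 = l' - l - 2 (stated without
  truncated subtraction).\<close>
definition pattern3 :: "nat \<Rightarrow> nat \<Rightarrow> (nat \<Rightarrow> nat) \<Rightarrow> (nat \<Rightarrow> nat) \<Rightarrow> bool" where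
  "pattern3 l l' x y \<longleftrightarrow>
     (x l, y l) \<in> {(0, 0), (1, 1)} \<and>
     (\<exists>k1 k2 :: nat. int k1 + int k2 = int l' - int l - 2 \<and>
        (\<forall>j. l < j \<and> j \<le> l + k1 \<longrightarrow> (x j, y j) \<in> {(0, 1), (1, 0)}) \<and>
        (x (l + k1 + 1), y (l + k1 + 1)) = (1, 1) \<and>
        (\<forall>j. l + k1 + 1 < j \<and> j < l' \<longrightarrow> (x j, y j) = (0, 0)) \<and>
        (x l', y l') \<in> {(0, 0), (0, 1), (1, 0)})"

end

theory Submission imports Defs begin

definition G :: "(nat \<Rightarrow> nat) \<Rightarrow> nat \<Rightarrow> int" where
  "G d n = (\<Sum>i\<le>n. int (d i) * 2 ^ (n - i))"

lemma G_Suc: "G d (Suc n) = 2 * G d n + int (d (Suc n))"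
proof -
  have "G d (Suc n) = (\<Sum>i\<le>n. int (d i) * 2 ^ (Suc n - i)) + int (d (Suc n))"
    unfolding G_def by simp
  also have "(\<Sum>i\<le>n. int (d i) * 2 ^ (Suc n - i)) = 2 * G d n"
    unfolding G_def sum_distrib_left
    by (rule sum.cong) (auto simp: Suc_diff_le)
  finally show ?thesis .
qed

lemma G_0: "G d 0 = int (d 0)" by (simp add: G_def)

lemma conc_bounds:
  assumes "concise_binary_expansion r d"
  shows "real_of_int (G d n) \<le> 2^n * r \<and> 2^n * r < real_of_int (G d n) + 1"
proof -
  have d01: "\<And>i. d i \<in> {0,1}" and s: "(\<lambda>i. real (d i)/2^i) sums r"
    and ne: "\<not> (\<exists>N. \<forall>i\<ge>N. d i = 1)"
    using assms unfolding concise_binary_expansion_def by auto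
  have dle: "\<And>i. real (d i) \<le> 1" using d01 by (metis insertE of_nat_le_1_iff order_refl singletonD zero_le_one)
  have sm: "summable (\<lambda>i. real (d i)/2^i)" using s sums_summable by blast
  have rsplit: "r = (\<Sum>i. real (d (i + Suc n))/2^(i + Suc n)) + (\<Sum>i<Suc n. real (d i)/2^i)"
    using suminf_split_initial_segment[OF sm, of "Suc n"] s sums_unique by fastforce
  define g where "g i = real (d (i + Suc n))/2^(i+1)" for i
  have gle: "g i \<le> (1/2)^Suc i" for i
    using dle[of "i + Suc n"] unfolding g_def by (simp add: divide_right_mono power_one_over)
  have g0: "0 \<le> g i" for i unfolding g_def by simp
  have sg: "summable g"
    by (rule summable_comparison_test[of _ "\<lambda>i. (1/2::real)^Suc i"])
       (use gle g0 power_half_series sums_summable in auto)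
  have tail: "2^n * (\<Sum>i. real (d (i + Suc n))/2^(i + Suc n)) = suminf g"
  proof -
    have "(\<lambda>i. 2^n * (real (d (i + Suc n))/2^(i + Suc n))) = g"
      unfolding g_def by (auto simp: power_add field_simps)
    moreover have "summable (\<lambda>i. real (d (i + Suc n))/2^(i + Suc n))"
      using sm summable_iff_shift[of "\<lambda>i. real (d i)/2^i" "Suc n"] by simp
    ultimately show ?thesis using suminf_mult by metis
  qed
  have head: "2^n * (\<Sum>i<Suc n. real (d i)/2^i) = real_of_int (G d n)"
  proof -
    have "2^n * (\<Sum>i<Suc n. real (d i)/2^i) = (\<Sum>i\<le>n. real (d i) * 2^(n-i))"
      unfolding sum_distrib_left lessThan_Suc_atMost
      by (rule sum.cong) (auto simp: power_diff)
    then show ?thesis unfolding G_def by simp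
  qed
  have "0 \<le> suminf g" using sg g0 suminf_nonneg by blast
  moreover have "suminf g < 1"
  proof -
    obtain i where i: "i \<ge> Suc n" "d i \<noteq> 1" using ne by blast
    then have di: "d i = 0" using d01 by auto
    define k where "k = i - Suc n"
    have ik: "i = k + Suc n" using i k_def by simp
    have sh: "summable (\<lambda>i. (1/2::real)^Suc i)" using power_half_series sums_summable by blast
    have "0 < (\<Sum>j. (1/2::real)^Suc j - g j)"
      apply (rule suminf_pos2[where i=k])
        apply (rule summable_diff[OF sh sg])
      using gle apply simp
      using di ik unfolding g_def by simp
    also have "\<dots> = 1 - suminf g" using suminf_diff[OF sh sg] power_half_series sums_unique by metis
    finally show ?thesis by simp
  qed
  ultimately show ?thesis using rsplit tail head by (simp add: distrib_left)
qed

lemma down: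
  fixes c :: "nat \<Rightarrow> int" and xb yb zb :: "nat \<Rightarrow> nat"
  assumes c01: "\<And>n. c n \<in> {0,1}"
    and R: "\<And>n. int (zb (Suc n)) + 2 * c n = int (xb (Suc n)) + int (yb (Suc n)) + c (Suc n)"
    and d01: "\<And>n. xb n \<in> {0,1}" "\<And>n. yb n \<in> {0,1}"
    and z0: "\<And>j. a < j \<Longrightarrow> j \<le> b \<Longrightarrow> zb j = 0"
    and cb: "c b = 1" and ab: "a \<le> b"
  shows "\<forall>k. k \<le> b - a \<longrightarrow> c (b - k) = 1 \<and> (k < b - a \<longrightarrow> int (xb (b-k)) + int (yb (b-k)) = 1)"
proof (intro allI)
  fix k show "k \<le> b - a \<longrightarrow> c (b - k) = 1 \<and> (k < b - a \<longrightarrow> int (xb (b-k)) + int (yb (b-k)) = 1)"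
  proof (induction k)
    case 0
    show ?case
    proof (intro impI conjI)
      show "c (b - 0) = 1" using cb by simp
      assume "0 < b - a"
      then have "b = Suc (b - 1)" by simp
      then have "int (zb b) + 2 * c (b-1) = int (xb b) + int (yb b) + c b" using R[of "b-1"] by simp
      moreover have "zb b = 0" using z0 `0 < b - a` by simp
      ultimately show "int (xb (b-0)) + int (yb (b-0)) = 1" using c01[of "b-1"] d01[of b] cb by auto
    qed
  next
    case (Suc k)
    show ?case
    proof (intro impI conjI)
      assume h: "Suc k \<le> b - a"
      let ?j = "b - k"
      have j: "?j = Suc (b - Suc k)" using h by simp
      have cj: "c ?j = 1" using Suc h by simp
      have "int (zb ?j) + 2 * c (b - Suc k) = int (xb ?j) + int (yb ?j) + c ?j" using R[of "b - Suc k"] j by simp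
      moreover have "zb ?j = 0" using z0 h by simp
      ultimately show c1: "c (b - Suc k) = 1" using c01[of "b - Suc k"] d01[of ?j] cj by auto
      assume "Suc k < b - a"
      then have j2: "b - Suc k = Suc (b - Suc (Suc k))" by simp
      have "int (zb (b - Suc k)) + 2 * c (b - Suc (Suc k)) = int (xb (b - Suc k)) + int (yb (b - Suc k)) + c (b - Suc k)"
        using R[of "b - Suc (Suc k)"] j2 by simp
      moreover have "zb (b - Suc k) = 0" using z0 `Suc k < b - a` by simp
      ultimately show "int (xb (b - Suc k)) + int (yb (b - Suc k)) = 1"
        using c01[of "b - Suc (Suc k)"] d01[of "b - Suc k"] c1 by auto
    qed
  qed
qed

lemma down2:
  fixes c :: "nat \<Rightarrow> int" and xb yb zb :: "nat \<Rightarrow> nat"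
  assumes c01: "\<And>n. c n \<in> {0,1}"
    and R: "\<And>n. int (zb (Suc n)) + 2 * c n = int (xb (Suc n)) + int (yb (Suc n)) + c (Suc n)"
    and d01: "\<And>n. xb n \<in> {0,1}" "\<And>n. yb n \<in> {0,1}"
    and z0: "\<And>j. a < j \<Longrightarrow> j \<le> b \<Longrightarrow> zb j = 0"
    and cb: "c b = 1" and ab: "a \<le> b"
  shows "c a = 1" "\<And>j. a < j \<Longrightarrow> j \<le> b \<Longrightarrow> (xb j, yb j) \<in> {(0,1),(1,0)}"
proof -
  note D = down[OF assms]
  show "c a = 1" using D[rule_format, of "b - a"] ab by simp
  fix j assume "a < j" "j \<le> b"
  then have "int (xb j) + int (yb j) = 1" using D[rule_format, of "b - j"] by simp
  then show "(xb j, yb j) \<in> {(0,1),(1,0)}" using d01[of j] by auto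
qed

lemma comb:
  fixes c :: "nat \<Rightarrow> int" and xb yb zb :: "nat \<Rightarrow> nat"
  assumes c01: "\<And>n. c n \<in> {0,1}"
    and R: "\<And>n. int (zb (Suc n)) + 2 * c n = int (xb (Suc n)) + int (yb (Suc n)) + c (Suc n)"
    and d01: "\<And>n. xb n \<in> {0,1}" "\<And>n. yb n \<in> {0,1}"
    and Rl: "\<exists>e\<in>{0,1}. int (zb l) + 2 * e = int (xb l) + int (yb l) + c l"
    and ll: "l < l'" and zl: "zb l = 1" "zb l' = 1"
    and zm: "\<forall>j. l + 1 \<le> j \<and> j \<le> l' - 1 \<longrightarrow> zb j = 0"
  shows "pattern1 l l' xb yb \<or> pattern2 l l' xb yb \<or> pattern3 l l' xb yb"
proof -
  have z0: "\<And>j. l < j \<Longrightarrow> j < l' \<Longrightarrow> zb j = 0" using zm by auto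
  obtain e where e: "e \<in> {0,1}" "int (zb l) + 2 * e = int (xb l) + int (yb l) + c l" using Rl by blast
  have l'S: "l' = Suc (l' - 1)" using ll by simp
  have Rl': "1 + 2 * c (l' - 1) = int (xb l') + int (yb l') + c l'" using R[of "l'-1"] l'S zl by simp
  show ?thesis
  proof (cases "c (l' - 1) = 1")
    case True
    then have top: "xb l' = 1" "yb l' = 1" "c l' = 1" using Rl' c01[of l'] d01[of l'] by auto
    have D: "c l = 1" "\<And>j. l < j \<Longrightarrow> j \<le> l' - 1 \<Longrightarrow> (xb j, yb j) \<in> {(0,1),(1,0)}"
       apply (rule down2(1)[where xb=xb and yb=yb and zb=zb and b="l'-1"])
       apply (use c01 R d01 z0 True ll in auto)[7]
      apply (rule down2(2)[where c=c and xb=xb and yb=yb and zb=zb and a=l and b="l'-1"])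
      apply (use c01 R d01 z0 True ll in auto)
      done
    have bot: "(xb l, yb l) \<in> {(0,0),(1,1)}" using e D(1) zl d01[of l] by auto
    have mid: "(xb j, yb j) \<in> {(0,1),(1,0)}" if "l < j" "j < l'" for j
      using D(2)[of j] that by simp
    have "pattern2 l l' xb yb" unfolding pattern2_def using top mid bot by simp
    then show ?thesis by simp
  next
    case False
    then have c0: "c (l' - 1) = 0" using c01 by auto
    have topp: "(xb l', yb l') \<in> {(0, 0), (0, 1), (1, 0)}" using Rl' c0 c01[of l'] d01[of l'] by auto
    show ?thesis
    proof (cases "\<exists>j. l \<le> j \<and> j < l' \<and> c j = 1")
      case False
      have mid: "(xb j, yb j) = (0,0)" if "l < j" "j < l'" for j
      proof -
        have jS: "j = Suc (j - 1)" using that by simp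
        have "int (zb j) + 2 * c (j-1) = int (xb j) + int (yb j) + c j" using R[of "j-1"] jS by simp
        moreover have "c j = 0" using False that c01[of j] by auto
        moreover have "c (j-1) = 0" using False that c01[of "j-1"] by auto
        ultimately show ?thesis using z0 that d01[of j] by auto
      qed
      have "c l = 0" using False ll c01 by blast
      then have "(xb l, yb l) \<in> {(0,1),(1,0)}" using e zl d01[of l] by auto
      then have "pattern1 l l' xb yb" unfolding pattern1_def using mid topp by auto
      then show ?thesis by simp
    next
      case True
      define S where "S = {j. l \<le> j \<and> j < l' \<and> c j = 1}"
      have fS: "finite S" unfolding S_def by auto
      have neS: "S \<noteq> {}" using True unfolding S_def by auto
      define p where "p = Max S"
      have pS: "p \<in> S" using fS neS p_def Max_in by blast
      have pmax: "\<And>j. j \<in> S \<Longrightarrow> j \<le> p" using fS p_def by auto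
      have pl: "l \<le> p" "p < l'" "c p = 1" using pS unfolding S_def by auto
      have pl2: "p + 1 < l'" using pl c0 by (metis Suc_eq_plus1 Suc_lessI add_diff_cancel_right' zero_neq_one)
      have cz: "c j = 0" if "p < j" "j < l'" for j
      proof -
        have "j \<notin> S" using pmax that by fastforce
        then show ?thesis using that pl c01[of j] unfolding S_def by auto
      qed
      have q: "(xb (p+1), yb (p+1)) = (1,1)"
      proof -
        have "int (zb (Suc p)) + 2 * c p = int (xb (Suc p)) + int (yb (Suc p)) + c (Suc p)" using R[of p] .
        moreover have "zb (Suc p) = 0" using z0 pl pl2 by simp
        moreover have "c (Suc p) = 0" using cz pl2 by simp
        ultimately show ?thesis using pl d01[of "Suc p"] by auto
      qed
      have after: "(xb j, yb j) = (0,0)" if "p + 1 < j" "j < l'" for j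
      proof -
        have jS: "j = Suc (j - 1)" using that by simp
        have "int (zb j) + 2 * c (j-1) = int (xb j) + int (yb j) + c j" using R[of "j-1"] jS by simp
        moreover have "c j = 0" "c (j-1) = 0" using cz that by auto
        ultimately show ?thesis using z0[of j] that pl d01[of j] by auto
      qed
      have D: "c l = 1" "\<And>j. l < j \<Longrightarrow> j \<le> p \<Longrightarrow> (xb j, yb j) \<in> {(0,1),(1,0)}"
       apply (rule down2(1)[where xb=xb and yb=yb and zb=zb and b=p])
       apply (use c01 R d01 z0 pl pl2 in auto)[7]
      apply (rule down2(2)[where c=c and xb=xb and yb=yb and zb=zb and a=l and b=p])
      apply (use c01 R d01 z0 pl pl2 in auto)
      done
      have bot: "(xb l, yb l) \<in> {(0,0),(1,1)}" using e D(1) zl d01[of l] by auto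
      have "pattern3 l l' xb yb" unfolding pattern3_def
        apply (rule conjI[OF bot])
      proof (intro exI conjI)
        show "int (p - l) + int (l' - p - 2) = int l' - int l - 2" using pl pl2 by simp
        show "\<forall>j. l < j \<and> j \<le> l + (p - l) \<longrightarrow> (xb j, yb j) \<in> {(0, 1), (1, 0)}"
          using D(2) pl by simp
        show "(xb (l + (p - l) + 1), yb (l + (p - l) + 1)) = (1, 1)" using q pl by simp
        show "\<forall>j. l + (p - l) + 1 < j \<and> j < l' \<longrightarrow> (xb j, yb j) = (0, 0)"
          using after pl by simp
        show "(xb l', yb l') \<in> {(0, 0), (0, 1), (1, 0)}" using topp .
      qed
      then show ?thesis by simp
    qed
  qed
qed

theorem theorem4p4:
  fixes z x y :: real and zb xb yb :: "nat \<Rightarrow> nat" and l l' :: nat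
  assumes "z \<in> {0..1}" "x \<in> {0..1}" "y \<in> {0..1}"
    and "z = x + y"
    and "concise_binary_expansion z zb"
    and "concise_binary_expansion x xb"
    and "concise_binary_expansion y yb"
    and "l < l'"
    and "zb l = 1" "zb l' = 1"
    and "\<forall>j. l + 1 \<le> j \<and> j \<le> l' - 1 \<longrightarrow> zb j = 0"
  shows "(pattern1 l l' xb yb \<and> \<not> pattern2 l l' xb yb \<and> \<not> pattern3 l l' xb yb) \<or>
         (\<not> pattern1 l l' xb yb \<and> pattern2 l l' xb yb \<and> \<not> pattern3 l l' xb yb) \<or>
         (\<not> pattern1 l l' xb yb \<and> \<not> pattern2 l l' xb yb \<and> pattern3 l l' xb yb)"
proof -
  define c where "c n = G zb n - G xb n - G yb n" for n
  have c01: "c n \<in> {0,1}" for n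
  proof -
    have bz: "real_of_int (G zb n) \<le> 2^n * z \<and> 2^n * z < real_of_int (G zb n) + 1"
      using conc_bounds[OF assms(5)] .
    have bx: "real_of_int (G xb n) \<le> 2^n * x \<and> 2^n * x < real_of_int (G xb n) + 1"
      using conc_bounds[OF assms(6)] .
    have by': "real_of_int (G yb n) \<le> 2^n * y \<and> 2^n * y < real_of_int (G yb n) + 1"
      using conc_bounds[OF assms(7)] .
    have e: "2^n * z = 2^n * x + 2^n * y" using assms(4) by (simp add: distrib_left)
    have "real_of_int (c n) > -1" "real_of_int (c n) < 2"
      unfolding c_def using bz bx by' e by auto
    then have "c n > -1" "c n < 2" by linarith+
    then show ?thesis by auto
  qed
  have d01: "\<And>n. xb n \<in> {0,1}" "\<And>n. yb n \<in> {0,1}"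
    using assms(6,7) unfolding concise_binary_expansion_def by auto
  have R: "int (zb (Suc n)) + 2 * c n = int (xb (Suc n)) + int (yb (Suc n)) + c (Suc n)" for n
    unfolding c_def G_Suc by simp
  have Rl: "\<exists>e\<in>{0,1}. int (zb l) + 2 * e = int (xb l) + int (yb l) + c l"
  proof (cases l)
    case 0
    then show ?thesis by (intro bexI[of _ 0]) (auto simp: c_def G_0)
  next
    case (Suc m)
    then show ?thesis using R[of m] c01[of m] by blast
  qed
  have main: "pattern1 l l' xb yb \<or> pattern2 l l' xb yb \<or> pattern3 l l' xb yb"
    by (rule comb[OF c01 R d01 Rl assms(8-11)])
  have p1: "pattern1 l l' xb yb \<Longrightarrow> (xb l, yb l) \<in> {(0,1),(1,0)}" by (simp add: pattern1_def)
  have p2: "pattern2 l l' xb yb \<Longrightarrow> (xb l, yb l) \<in> {(0,0),(1,1)} \<and> (xb l', yb l') = (1,1)"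
    by (simp add: pattern2_def)
  have p3: "pattern3 l l' xb yb \<Longrightarrow> (xb l, yb l) \<in> {(0,0),(1,1)} \<and> (xb l', yb l') \<in> {(0, 0), (0, 1), (1, 0)}"
    unfolding pattern3_def by blast
  show ?thesis using main p1 p2 p3 by auto
qed

end
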